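(* For every $[t_0:t_1]\in\mathbb{P}^1_{\mathbb{C}}$ with $[t_0:t_1]\neq[1:0]$, the polynomial $F^{[t_0:t_1]}_{S_2}=t_0F_{S_2}(x_2^3-x_3^3)+t_1\left(G_2-F_{S_2}(x_2^3-x_3^3)\right)$ defines an irreducible surface in $\mathbb{P}^3_{\mathbb{C}}$.
   Context: $\mathbb{P}^3_{\mathbb{C}}=\operatorname{Proj}\mathbb{C}[x_0,\dots,x_3]$, $F_{S_1}=x_0^9+(x_1^3-x_2^3)(x_2^3-x_3^3)(x_3^3-x_1^3)$, $F_{S_2}=F_{S_1}(x_0^9-x_1^3x_2^3x_3^3)+x_1^6x_2^6x_3^6$, $G_2=x_0^{21}+x_1^{21}+x_2^{21}-x_3^{21}$. *)

theory Defs
  imports "HOL-Computational_Algebra.Polynomial_Factorial"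
begin

text \<open>Polynomials in C[x0,x1,x2,x3], represented as iterated univariate polynomials
  ((C[x0])[x1])[x2])[x3]: the outermost polynomial variable is x3, the innermost is x0.\<close>

type_synonym mpoly4 = "complex poly poly poly poly"

definition X0 :: mpoly4 where "X0 = [:[:[:[:0, 1:]:]:]:]"
definition X1 :: mpoly4 where "X1 = [:[:[:0, 1:]:]:]"
definition X2 :: mpoly4 where "X2 = [:[:0, 1:]:]"
definition X3 :: mpoly4 where "X3 = [:0, 1:]"

definition const4 :: "complex \<Rightarrow> mpoly4" where "const4 c = [:[:[:[:c:]:]:]:]"

definition F_S1 :: mpoly4 where
  "F_S1 = X0^9 + (X1^3 - X2^3) * (X2^3 - X3^3) * (X3^3 - X1^3)"

definition F_S2 :: mpoly4 where
  "F_S2 = F_S1 * (X0^9 - X1^3 * X2^3 * X3^3) + X1^6 * X2^6 * X3^6"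

definition G_2 :: mpoly4 where
  "G_2 = X0^21 + X1^21 + X2^21 - X3^21"

definition F_S2_pencil :: "complex \<Rightarrow> complex \<Rightarrow> mpoly4" where
  "F_S2_pencil t0 t1 =
     const4 t0 * (F_S2 * (X2^3 - X3^3)) + const4 t1 * (G_2 - F_S2 * (X2^3 - X3^3))"

end

theory Submission
  imports Defs
begin


definition hom :: "('a::comm_ring_1 \<Rightarrow> 'b::comm_ring_1) \<Rightarrow> bool" where
  "hom f \<longleftrightarrow> (\<forall>x y. f (x + y) = f x + f y) \<and> (\<forall>x y. f (x * y) = f x * f y) \<and> f 1 = 1"

lemma hom_add: "hom f \<Longrightarrow> f (x + y) = f x + f y" by (simp add: hom_def)
lemma hom_mult: "hom f \<Longrightarrow> f (x * y) = f x * f y" by (simp add: hom_def)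
lemma hom_1: "hom f \<Longrightarrow> f 1 = 1" by (simp add: hom_def)
lemma hom_0: "hom f \<Longrightarrow> f 0 = 0"
  using hom_add[of f 0 0] by simp
lemma hom_uminus: "hom f \<Longrightarrow> f (- x) = - f x"
  using hom_add[of f x "-x"] hom_0[of f] by (simp add: eq_neg_iff_add_eq_0 add.commute)
lemma hom_diff: "hom f \<Longrightarrow> f (x - y) = f x - f y"
  using hom_add[of f x "-y"] hom_uminus[of f y] by simp
lemma hom_power: "hom f \<Longrightarrow> f (x ^ n) = f x ^ n"
  by (induction n) (simp_all add: hom_1 hom_mult)
lemma hom_unit: "hom f \<Longrightarrow> is_unit x \<Longrightarrow> is_unit (f x)"
  by (metis dvdE dvdI hom_1 hom_mult)
lemma hom_comp: "hom f \<Longrightarrow> hom g \<Longrightarrow> hom (f \<circ> g)"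
  by (simp add: hom_def)
lemma hom_const: "hom (\<lambda>c. [:c:])"
  by (simp add: hom_def one_pCons)
lemma hom_eval: "hom (\<lambda>p. poly p a)"
  by (simp add: hom_def)

lemma map_poly_add_h: "hom f \<Longrightarrow> map_poly f (p + q) = map_poly f p + map_poly f q"
  by (intro poly_eqI) (simp add: coeff_map_poly hom_0 hom_add)

lemma map_poly_mult_h: "hom f \<Longrightarrow> map_poly f (p * q) = map_poly f p * map_poly f q"
proof (induction p)
  case 0 then show ?case by simp
next
  case (pCons a p)
  have "map_poly f (smult a q) = smult (f a) (map_poly f q)"
    by (intro poly_eqI) (simp add: coeff_map_poly hom_0 hom_mult pCons.prems)
  then show ?case using pCons
    by (simp add: map_poly_add_h map_poly_pCons hom_0)
qed

lemma hom_map_poly: "hom f \<Longrightarrow> hom (map_poly f)"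
  unfolding hom_def[of "map_poly f"]
  by (simp add: map_poly_add_h map_poly_mult_h hom_1)

lemma hom_unique:
  fixes f g :: "'a::comm_ring_1 poly \<Rightarrow> 'b::comm_ring_1"
  assumes "hom f" "hom g" "f [:0,1:] = g [:0,1:]" "\<And>c. f [:c:] = g [:c:]"
  shows "f p = g p"
proof (induction p)
  case 0 then show ?case using assms by (simp add: hom_0)
next
  case (pCons a p)
  have e: "pCons a p = [:a:] + [:0,1:] * p" by simp
  have 1: "f (pCons a p) = f [:a:] + f [:0,1:] * f p" by (subst e) (simp only: hom_add[OF assms(1)] hom_mult[OF assms(1)])
  have 2: "g (pCons a p) = g [:a:] + g [:0,1:] * g p" by (subst e) (simp only: hom_add[OF assms(2)] hom_mult[OF assms(2)])
  show ?case unfolding 1 2 using pCons.IH assms(3) assms(4)[of a] by simp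
qed




definition s0 :: "complex poly \<Rightarrow> mpoly4" where "s0 c = [:[:[:c:]:]:]"
definition s1 :: "complex poly poly \<Rightarrow> mpoly4" where "s1 r = poly (map_poly s0 r) X3"
definition s2 :: "complex poly poly poly \<Rightarrow> mpoly4" where "s2 q = poly (map_poly s1 q) X2"
definition sig :: "mpoly4 \<Rightarrow> mpoly4" where "sig p = poly (map_poly s2 p) X1"

lemma hom_s0: "hom s0"
proof -
  have "s0 = (\<lambda>c. [:c:]) \<circ> ((\<lambda>c. [:c:]) \<circ> (\<lambda>c. [:c:]))" by (auto simp: s0_def)
  then show ?thesis by (metis hom_comp hom_const)
qed
lemma hom_s1: "hom s1"
proof -
  have "s1 = (\<lambda>p. poly p X3) \<circ> map_poly s0" by (auto simp: s1_def)
  then show ?thesis by (metis hom_comp hom_eval hom_map_poly hom_s0)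
qed
lemma hom_s2: "hom s2"
proof -
  have "s2 = (\<lambda>p. poly p X2) \<circ> map_poly s1" by (auto simp: s2_def)
  then show ?thesis by (metis hom_comp hom_eval hom_map_poly hom_s1)
qed
lemma hom_sig: "hom sig"
proof -
  have "sig = (\<lambda>p. poly p X1) \<circ> map_poly s2" by (auto simp: sig_def)
  then show ?thesis by (metis hom_comp hom_eval hom_map_poly hom_s2)
qed

lemmas z0 = hom_0[OF hom_s0] hom_0[OF hom_s1] hom_0[OF hom_s2] hom_0[OF hom_sig]

lemma sig_X0: "sig X0 = X0" by (simp add: sig_def s2_def s1_def s0_def X0_def map_poly_pCons z0 one_pCons[symmetric] hom_1[OF hom_s0] hom_1[OF hom_s1] hom_1[OF hom_s2])
lemma sig_X1: "sig X1 = X3" by (simp add: sig_def s2_def s1_def s0_def X1_def X3_def map_poly_pCons z0 one_pCons[symmetric] hom_1[OF hom_s0] hom_1[OF hom_s1] hom_1[OF hom_s2])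
lemma sig_X2: "sig X2 = X2" by (simp add: sig_def s2_def s1_def s0_def X2_def map_poly_pCons z0 one_pCons[symmetric] hom_1[OF hom_s0] hom_1[OF hom_s1] hom_1[OF hom_s2])
lemma sig_X3: "sig X3 = X1" by (simp add: sig_def s2_def s1_def s0_def X1_def X3_def map_poly_pCons z0 one_pCons[symmetric] hom_1[OF hom_s0] hom_1[OF hom_s1] hom_1[OF hom_s2])
lemma sig_c: "sig (const4 c) = const4 c" by (simp add: sig_def s2_def s1_def s0_def const4_def map_poly_pCons z0 one_pCons[symmetric] hom_1[OF hom_s0] hom_1[OF hom_s1] hom_1[OF hom_s2])
lemma sig_s0: "sig (s0 c) = s0 c" by (simp add: sig_def s2_def s1_def s0_def map_poly_pCons z0 one_pCons[symmetric] hom_1[OF hom_s0] hom_1[OF hom_s1] hom_1[OF hom_s2])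

lemma hom_ss: "hom (\<lambda>p. sig (sig p))"
  using hom_comp[OF hom_sig hom_sig] by (simp add: comp_def)

lemma ss0: "sig (sig (s0 c)) = s0 c"
proof -
  have "(\<lambda>c. sig (sig (s0 c))) c = s0 c"
  proof (rule hom_unique[where f="\<lambda>c. sig (sig (s0 c))" and g=s0])
    show "hom (\<lambda>c. sig (sig (s0 c)))" using hom_comp[OF hom_ss hom_s0] by (simp only: comp_def)
    show "hom s0" by (rule hom_s0)
    have e: "s0 [:0, 1:] = X0" by (simp only: X0_def s0_def)
    show "sig (sig (s0 [:0, 1:])) = s0 [:0, 1:]"
      unfolding e sig_X0 by (rule refl)
    show "sig (sig (s0 [:d:])) = s0 [:d:]" for d
    proof -
      have e: "s0 [:d:] = const4 d" by (simp only: const4_def s0_def)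
      show ?thesis unfolding e sig_c by (rule refl)
    qed
  qed
  then show ?thesis by (simp only:)
qed

lemma ss1: "sig (sig [:[:r:]:]) = [:[:r:]:]"
proof -
  have "(\<lambda>r. sig (sig [:[:r:]:])) r = (\<lambda>r. [:[:r:]:]) r"
  proof (rule hom_unique[where f="\<lambda>r. sig (sig [:[:r:]:])" and g="\<lambda>r. [:[:r:]:]"])
    have "hom (\<lambda>r::complex poly poly. [:[:r:]:])"
      using hom_comp[OF hom_const hom_const] by (simp only: comp_def)
    then show "hom (\<lambda>r. sig (sig [:[:r:]:]))" "hom (\<lambda>r::complex poly poly. [:[:r:]:])"
      using hom_comp[OF hom_ss] by (auto simp only: comp_def)
    have e: "[:[:[:0, 1:]:]:] = X1" by (simp only: X1_def)
    show "sig (sig [:[:[:0, 1:]:]:]) = [:[:[:0, 1:]:]:]"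
      unfolding e sig_X1 sig_X3 by (rule refl)
    show "sig (sig [:[:[:d:]:]:]) = [:[:[:d:]:]:]" for d
      using ss0[of d] by (simp only: s0_def)
  qed
  then show ?thesis by (simp only:)
qed

lemma ss2: "sig (sig [:q:]) = [:q:]"
proof -
  have "(\<lambda>q. sig (sig [:q:])) q = (\<lambda>q. [:q:]) q"
  proof (rule hom_unique[where f="\<lambda>q. sig (sig [:q:])" and g="\<lambda>q. [:q:]"])
    show "hom (\<lambda>q. sig (sig [:q:]))" using hom_comp[OF hom_ss hom_const] by (simp only: comp_def)
    show "hom (\<lambda>q::complex poly poly poly. [:q:])" by (rule hom_const)
    have e: "[:[:0, 1:]:] = X2" by (simp only: X2_def)
    show "sig (sig [:[:0, 1:]:]) = [:[:0, 1:]:]"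
      unfolding e sig_X2 by (rule refl)
    show "sig (sig [:[:d:]:]) = [:[:d:]:]" for d
      by (rule ss1)
  qed
  then show ?thesis by (simp only:)
qed

lemma ss: "sig (sig p) = p"
proof -
  have "(\<lambda>p. sig (sig p)) p = (\<lambda>p. p) p"
  proof (rule hom_unique[where f="\<lambda>p. sig (sig p)" and g="\<lambda>p. p"])
    show "hom (\<lambda>p. sig (sig p))" by (rule hom_ss)
    show "hom (\<lambda>p::mpoly4. p)" by (simp add: hom_def)
    have e: "[:0, 1:] = X3" by (simp only: X3_def)
    show "sig (sig [:0, 1:]) = [:0, 1:]"
      unfolding e sig_X3 sig_X1 by (rule refl)
    show "sig (sig [:d:]) = [:d:]" for d
      by (rule ss2)
  qed
  then show ?thesis by (simp only:)
qed

definition penc :: "'a::comm_ring_1 \<Rightarrow> 'a \<Rightarrow> 'a \<Rightarrow> 'a \<Rightarrow> 'a \<Rightarrow> 'a \<Rightarrow> 'a" where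
  "penc x0 x1 x2 x3 a b =
    (let f1 = x0^9 + (x1^3 - x2^3) * (x2^3 - x3^3) * (x3^3 - x1^3);
         f2 = f1 * (x0^9 - x1^3 * x2^3 * x3^3) + x1^6 * x2^6 * x3^6;
         g = x0^21 + x1^21 + x2^21 - x3^21
     in a * (f2 * (x2^3 - x3^3)) + b * (g - f2 * (x2^3 - x3^3)))"

lemma pencil_hom: assumes "hom h" shows "h (F_S2_pencil t0 t1) = penc (h X0) (h X1) (h X2) (h X3) (h (const4 t0)) (h (const4 t1))"
  unfolding F_S2_pencil_def F_S2_def F_S1_def G_2_def penc_def Let_def
  by (simp only: hom_add[OF assms] hom_mult[OF assms] hom_diff[OF assms] hom_power[OF assms])




definition psi0 :: "complex poly \<Rightarrow> complex poly" where "psi0 c = [:poly c 0:]"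
definition psi1 :: "complex poly poly \<Rightarrow> complex poly" where "psi1 r = poly (map_poly psi0 r) 1"
definition psi :: "complex poly poly poly \<Rightarrow> complex poly" where "psi q = poly (map_poly psi1 q) [:1,1:]"
definition Phi :: "mpoly4 \<Rightarrow> complex poly poly" where "Phi = map_poly psi"
definition rho :: "complex poly poly \<Rightarrow> complex poly" where "rho = map_poly (\<lambda>c. poly c 0)"

lemma hom_psi0: "hom psi0"
proof -
  have "psi0 = (\<lambda>c. [:c:]) \<circ> (\<lambda>c. poly c 0)" by (auto simp: psi0_def)
  then show ?thesis by (metis hom_comp hom_const hom_eval)
qed
lemma hom_psi1: "hom psi1"
proof -
  have "psi1 = (\<lambda>p. poly p 1) \<circ> map_poly psi0" by (auto simp: psi1_def)
  then show ?thesis by (metis hom_comp hom_eval hom_map_poly hom_psi0)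
qed
lemma hom_psi: "hom psi"
proof -
  have "psi = (\<lambda>p. poly p [:1,1:]) \<circ> map_poly psi1" by (auto simp: psi_def)
  then show ?thesis by (metis hom_comp hom_eval hom_map_poly hom_psi1)
qed
lemma hom_Phi: "hom Phi" unfolding Phi_def by (rule hom_map_poly[OF hom_psi])
lemma hom_rho: "hom rho" unfolding rho_def by (rule hom_map_poly[OF hom_eval])

lemmas z1 = hom_0[OF hom_psi0] hom_0[OF hom_psi1] hom_0[OF hom_psi] hom_1[OF hom_psi0] hom_1[OF hom_psi1] hom_1[OF hom_psi]

lemma Phi_X0: "Phi X0 = 0" by (simp add: Phi_def psi_def psi1_def psi0_def X0_def map_poly_pCons z1 one_pCons[symmetric])
lemma Phi_X1: "Phi X1 = 1" by (simp add: Phi_def psi_def psi1_def psi0_def X1_def map_poly_pCons z1 one_pCons[symmetric])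
lemma Phi_X2: "Phi X2 = [:[:1,1:]:]" by (simp add: Phi_def psi_def psi1_def psi0_def X2_def map_poly_pCons z1 one_pCons[symmetric])
lemma Phi_X3: "Phi X3 = [:0,1:]" by (simp add: Phi_def psi_def psi1_def psi0_def X3_def map_poly_pCons z1 one_pCons[symmetric])
lemma Phi_c: "Phi (const4 c) = [:[:c:]:]" by (simp add: Phi_def psi_def psi1_def psi0_def const4_def map_poly_pCons z1 one_pCons[symmetric])

lemma rho_simps: "rho 0 = 0" "rho 1 = 1" "rho [:0,1:] = [:0,1:]" "rho [:[:1,1:]:] = 1" "rho [:[:c:]:] = [:c:]"
  by (simp_all add: rho_def map_poly_pCons one_pCons[symmetric])

lemma penc1: "penc 0 z 1 1 a b = b * z^21" by (simp add: penc_def Let_def)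
lemma penc2: "penc 0 0 y 1 a b = b * (y^21 - 1)" by (simp add: penc_def Let_def)

lemma red_mod_y: "rho (Phi (sig (F_S2_pencil t0 t1))) = [:t1:] * [:0,1:]^21"
proof -
  have h: "hom (rho \<circ> Phi \<circ> sig)" by (intro hom_comp hom_rho hom_Phi hom_sig)
  have e: "(rho \<circ> Phi \<circ> sig) X0 = 0" "(rho \<circ> Phi \<circ> sig) X1 = [:0,1:]"
    "(rho \<circ> Phi \<circ> sig) X2 = 1" "(rho \<circ> Phi \<circ> sig) X3 = 1"
    "(rho \<circ> Phi \<circ> sig) (const4 c) = [:c:]" for c
    by (simp_all add: sig_X0 sig_X1 sig_X2 sig_X3 sig_c Phi_X0 Phi_X1 Phi_X2 Phi_X3 Phi_c rho_simps)
  show ?thesis using pencil_hom[OF h, of t0 t1] unfolding e penc1 by (simp only: o_apply)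
qed

lemma const_term: "poly (Phi (sig (F_S2_pencil t0 t1))) 0 = [:t1:] * ([:1,1:]^21 - 1)"
proof -
  have h: "hom ((\<lambda>p. poly p 0) \<circ> Phi \<circ> sig)" by (intro hom_comp hom_eval hom_Phi hom_sig)
  have e: "((\<lambda>p. poly p 0) \<circ> Phi \<circ> sig) X0 = 0" "((\<lambda>p. poly p 0) \<circ> Phi \<circ> sig) X1 = 0"
    "((\<lambda>p. poly p 0) \<circ> Phi \<circ> sig) X2 = [:1,1:]" "((\<lambda>p. poly p 0) \<circ> Phi \<circ> sig) X3 = 1"
    "((\<lambda>p. poly p 0) \<circ> Phi \<circ> sig) (const4 c) = [:c:]" for c
    by (simp_all add: sig_X0 sig_X1 sig_X2 sig_X3 sig_c Phi_X0 Phi_X1 Phi_X2 Phi_X3 Phi_c)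
  show ?thesis using pencil_hom[OF h, of t0 t1] unfolding e penc2 by (simp only: o_apply)
qed

lemma coeff_lin_pow: "coeff ([:1,1:]^n :: complex poly) 0 = 1 \<and> coeff ([:1,1:]^n :: complex poly) 1 = of_nat n"
  by (induction n) (auto simp: coeff_pCons)




lemma dmul: "degree p \<le> a \<Longrightarrow> degree q \<le> b \<Longrightarrow> degree (p * q) \<le> a + b"
  by (meson add_mono degree_mult_le order_trans)
lemma dadd: "degree p \<le> a \<Longrightarrow> degree q \<le> a \<Longrightarrow> degree (p + q) \<le> a"
  by (meson degree_add_le)
lemma ddiff: "degree p \<le> a \<Longrightarrow> degree q \<le> a \<Longrightarrow> degree (p - q :: 'a::comm_ring_1 poly) \<le> a"
  by (meson degree_diff_le)
lemma dpow: "degree p \<le> a \<Longrightarrow> degree (p ^ n) \<le> n * a"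
  by (rule order_trans[OF degree_power_le]) simp
lemma dle: "degree p \<le> a \<Longrightarrow> a \<le> b \<Longrightarrow> degree p \<le> b" by simp

lemma gen_split: "a * (F * D) + b * ((x0^21 + x1^21 + x2^21 - x3^21) - F * D)
   = b * x1^21 + ((a - b) * (F * D) + b * (x0^21 + x2^21 - x3^21))" for a b F D x0 x1 x2 x3 :: "'a::comm_ring_1"
  by (simp add: algebra_simps)

lemma penc_split: "penc x0 x1 x2 x3 a b = b * x1^21 +
   ((a - b) * (((x0^9 + (x1^3 - x2^3) * (x2^3 - x3^3) * (x3^3 - x1^3)) * (x0^9 - x1^3 * x2^3 * x3^3) + x1^6 * x2^6 * x3^6) * (x2^3 - x3^3))
    + b * (x0^21 + x2^21 - x3^21))"
  unfolding penc_def Let_def by (rule gen_split)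

lemma Q_eq: "sig (F_S2_pencil t0 t1) = penc X0 X3 X2 X1 (const4 t0) (const4 t1)"
  using pencil_hom[OF hom_sig, of t0 t1] by (simp only: sig_X0 sig_X1 sig_X2 sig_X3 sig_c)

lemma Q_shape: "degree (sig (F_S2_pencil t0 t1)) \<le> 21 \<and> coeff (sig (F_S2_pencil t0 t1)) 21 = [:[:[:t1:]:]:]"
proof -
  have d0: "degree X0 \<le> 0" "degree X1 \<le> 0" "degree X2 \<le> 0" "degree (const4 c) \<le> 0" for c
    by (simp_all add: X0_def X1_def X2_def const4_def)
  have d3: "degree X3 \<le> 1" by (simp add: X3_def)
  have p9: "degree (X0^9) \<le> 0" "degree (X2^3) \<le> 0" "degree (X1^3) \<le> 0"
    "degree (X0^21) \<le> 0" "degree (X2^21) \<le> 0" "degree (X1^21) \<le> 0"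
    "degree (X2^6) \<le> 0" "degree (X1^6) \<le> 0"
    using dpow[OF d0(1)] dpow[OF d0(2)] dpow[OF d0(3)] by auto
  have x3: "degree (X3^3) \<le> 3" "degree (X3^6) \<le> 6" "degree (X3^21) \<le> 21"
    using dpow[OF d3, of 3] dpow[OF d3, of 6] dpow[OF d3, of 21] by auto
  define f1 where "f1 = X0^9 + (X3^3 - X2^3) * (X2^3 - X1^3) * (X1^3 - X3^3)"
  have df1: "degree f1 \<le> 6" unfolding f1_def
    using dadd[OF dle[OF p9(1)] dle[OF dmul[OF dmul[OF ddiff[OF x3(1) dle[OF p9(2)]] ddiff[OF p9(2) p9(3)]] ddiff[OF dle[OF p9(3)] x3(1)]]]]
    by simp
  define f2 where "f2 = f1 * (X0^9 - X3^3 * X2^3 * X1^3) + X3^6 * X2^6 * X1^6"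
  have df2: "degree f2 \<le> 9" unfolding f2_def
    using dadd[OF dmul[OF df1 ddiff[OF dle[OF p9(1)] dmul[OF dmul[OF x3(1) p9(2)] p9(3)]]]
                  dle[OF dmul[OF dmul[OF x3(2) p9(7)] p9(8)]]]
    by simp
  define R where "R = (const4 t0 - const4 t1) * (f2 * (X2^3 - X1^3)) + const4 t1 * (X0^21 + X2^21 - X1^21)"
  have dR: "degree R \<le> 20" unfolding R_def
    using dadd[OF dle[OF dmul[OF ddiff[OF d0(4) d0(4)] dmul[OF df2 ddiff[OF p9(2) p9(3)]]]]
                  dle[OF dmul[OF d0(4) ddiff[OF dadd[OF p9(4) p9(5)] p9(6)]]]]
    by simp
  have Q: "sig (F_S2_pencil t0 t1) = const4 t1 * X3^21 + R"
    unfolding Q_eq penc_split R_def f2_def f1_def by (rule refl)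
  have m: "const4 t1 * X3^21 = monom [:[:[:t1:]:]:] 21"
    by (simp add: const4_def X3_def monom_altdef)
  have "coeff R 21 = 0" using dR by (simp add: coeff_eq_0)
  then have c: "coeff (sig (F_S2_pencil t0 t1)) 21 = [:[:[:t1:]:]:]"
    unfolding Q m by (simp add: const4_def)
  have "degree (sig (F_S2_pencil t0 t1)) \<le> 21"
    unfolding Q m by (intro dadd) (use dR in \<open>auto intro: dle simp: degree_monom_le\<close>)
  with c show ?thesis by simp
qed




lemma const4_unit: "t \<noteq> 0 \<Longrightarrow> is_unit ([:[:[:t:]:]:] :: complex poly poly poly)"
  by (simp add: is_unit_const_poly_iff dvd_field_iff)

lemma core:
  assumes t1: "t1 \<noteq> 0" and QAB: "sig (F_S2_pencil t0 t1) = A * B"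
  shows "is_unit A \<or> is_unit B"
proof -
  define Q where "Q = sig (F_S2_pencil t0 t1)"
  have degQ: "degree Q \<le> 21" and cQ: "coeff Q 21 = [:[:[:t1:]:]:]"
    using Q_shape[of t0 t1] by (simp_all add: Q_def)
  have QAB': "Q = A * B" using QAB by (simp add: Q_def)
  have Q0: "Q \<noteq> 0" using cQ t1 by auto
  then have A0: "A \<noteq> 0" and B0: "B \<noteq> 0" using QAB' by auto
  have dAB: "degree A + degree B \<le> 21" using degQ QAB' A0 B0 by (simp add: degree_mult_eq)
  define a2 where "a2 = rho (Phi A)"
  define b2 where "b2 = rho (Phi B)"
  have hRP: "hom (\<lambda>p. rho (Phi p))" using hom_comp[OF hom_rho hom_Phi] by (simp add: comp_def)
  have prod: "a2 * b2 = [:t1:] * [:0,1:]^21"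
    using red_mod_y[of t0 t1] hom_mult[OF hRP, of A B] QAB by (simp add: a2_def b2_def)
  have nz: "[:t1:] * [:0,1:]^(21::nat) \<noteq> (0::complex poly)" using t1 by simp
  have a20: "a2 \<noteq> 0" and b20: "b2 \<noteq> 0" using prod nz by auto
  have "degree ([:t1:] * [:0,1:]^(21::nat) :: complex poly) = 21"
    using t1 degree_linear_power[of "0::complex" 21] by (simp add: degree_mult_eq)
  then have dab2: "degree a2 + degree b2 = 21"
    using prod a20 b20 by (metis degree_mult_eq)
  have "degree a2 \<le> degree A" unfolding a2_def rho_def Phi_def
    by (meson map_poly_degree_leq order_trans)
  moreover have "degree b2 \<le> degree B" unfolding b2_def rho_def Phi_def
    by (meson map_poly_degree_leq order_trans)
  ultimately have dA: "degree a2 = degree A" and dB: "degree b2 = degree B"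
    using dAB dab2 by linarith+
  have unitcase: "is_unit X" if XY: "Q = X * Y \<or> Q = Y * X" and dX: "degree X = 0" for X Y
  proof -
    obtain c where Xc: "X = [:c:]" using dX by (metis degree_eq_zeroE)
    have "Q = smult c Y" using XY Xc by (auto simp: mult.commute)
    then have "coeff Q 21 = c * coeff Y 21" by simp
    then have "c dvd [:[:[:t1:]:]:]" using cQ by (metis dvd_triv_left)
    then have "is_unit c" using const4_unit[OF t1] dvd_unit_imp_unit by blast
    then show ?thesis using Xc by (simp add: is_unit_const_poly_iff)
  qed
  show ?thesis
  proof (cases "degree A = 0 \<or> degree B = 0")
    case True
    then show ?thesis using unitcase[of A B] unitcase[of B A] QAB' by blast
  next
    case False
    then have pa: "degree a2 \<ge> 1" and pb: "degree b2 \<ge> 1" using dA dB by auto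
    have o21: "order 0 ([:t1:] * [:0,1:]^(21::nat) :: complex poly) = 21"
    proof -
      have "order 0 ([:t1:] :: complex poly) = 0" using t1 by (intro order_0I) simp
      moreover have "order 0 ([:0,1:]^(21::nat) :: complex poly) = 21"
        using order_power_n_n[of "0::complex" 21] by simp
      ultimately show ?thesis unfolding order_mult[OF nz] by simp
    qed
    have "order 0 a2 + order 0 b2 = 21" using o21 prod nz by (metis order_mult)
    moreover have "order 0 a2 \<le> degree a2" "order 0 b2 \<le> degree b2"
      using a20 b20 by (simp_all add: order_degree)
    ultimately have "order 0 a2 \<noteq> 0" "order 0 b2 \<noteq> 0" using dab2 pa pb by linarith+
    then have "poly a2 0 = 0" "poly b2 0 = 0" by (simp_all add: order_root)
    then have ca: "coeff (coeff (Phi A) 0) 0 = 0" and cb: "coeff (coeff (Phi B) 0) 0 = 0"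
      by (simp_all add: a2_def b2_def rho_def poly_0_coeff_0 coeff_map_poly)
    have "poly (Phi Q) 0 = coeff (Phi A) 0 * coeff (Phi B) 0"
      using QAB' hom_mult[OF hom_Phi, of A B] by (simp add: poly_0_coeff_0 coeff_mult_0)
    then have e: "[:t1:] * ([:1,1:]^21 - 1) = coeff (Phi A) 0 * coeff (Phi B) 0"
      using const_term[of t0 t1] by (simp add: Q_def)
    have "coeff ([:t1:] * ([:1,1:]^21 - 1) :: complex poly) 1 = t1 * 21"
      using coeff_lin_pow[of 21] by simp
    moreover have "coeff (coeff (Phi A) 0 * coeff (Phi B) 0) 1 = 0"
      using ca cb by (simp add: coeff_mult)
    ultimately have "t1 * 21 = 0" using e by metis
    then show ?thesis using t1 by simp
  qed
qed

theorem lemmaA5: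
  fixes t0 t1 :: complex
  assumes "(t0, t1) \<noteq> (0, 0)"
    and "\<not> (\<exists>c. c \<noteq> 0 \<and> t0 = c * 1 \<and> t1 = c * 0)"
  shows "irreducible (F_S2_pencil t0 t1)"
proof -
  have t1: "t1 \<noteq> 0" using assms by auto
  define P where "P = F_S2_pencil t0 t1"
  have cQ: "coeff (sig P) 21 = [:[:[:t1:]:]:]" using Q_shape[of t0 t1] by (simp add: P_def)
  show ?thesis unfolding P_def[symmetric]
  proof (rule irreducibleI)
    show "P \<noteq> 0"
    proof
      assume "P = 0"
      then have "sig P = 0" using hom_0[OF hom_sig] by simp
      then show False using cQ t1 by simp
    qed
    show "\<not> is_unit P"
    proof
      assume "is_unit P"
      then have "is_unit (sig P)" by (rule hom_unit[OF hom_sig])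
      then obtain c where "sig P = [:c:]" by (auto simp: is_unit_poly_iff)
      then show False using cQ t1 by (simp add: coeff_eq_0)
    qed
    fix a b assume "P = a * b"
    then have "sig P = sig a * sig b" by (simp add: hom_mult[OF hom_sig])
    then have "is_unit (sig a) \<or> is_unit (sig b)" using core[OF t1] by (simp add: P_def)
    then show "is_unit a \<or> is_unit b" using hom_unit[OF hom_sig] ss by metis
  qed
qed


end
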